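(* Let $b>1$, $p\ge1$, $R\subseteq\{0,\ldots,p-1\}$ with $(p,R)$ proper. Let $k$ be the greatest divisor of $p$ coprime with $b$ and $d=p/k$. Then for all distinct integers $i,i'$ with $0\le i,i'<k$, the states $id$ and $i'd$ of $\mathcal{A}_{R,p}$ are not Nerode-equivalent.
   Context: $A_b=\{0,\ldots,b-1\}$. $\mathcal{A}_{R,p}$: complete deterministic automaton over $A_b$ with states $\{0,\ldots,p-1\}$, initial $0$, final states $R$, transitions $n\xrightarrow{a}(nb+a)\bmod p$. $(p,R)$ is proper if $p$ is the smallest period of $R+p\mathbb{N}$, i.e. there are no $1\le p'<p$, $R'\subseteq\{0,\ldots,p'-1\}$ with $R+p\mathbb{N}=R'+p'\mathbb{N}$. Two states $s,s'$ are Nerode-equivalent if for every word $u$, $s\cdot u$ is final iff $s'\cdot u$ is final ($s\cdot u$ = state reached from $s$ reading $u$). *)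

theory Defs
  imports Main "HOL-Computational_Algebra.Primes"
begin

definition trans_st :: "nat \<Rightarrow> nat \<Rightarrow> nat \<Rightarrow> nat \<Rightarrow> nat" where
  "trans_st b p n a = (n * b + a) mod p"

definition run_st :: "nat \<Rightarrow> nat \<Rightarrow> nat \<Rightarrow> nat list \<Rightarrow> nat" where
  "run_st b p s u = foldl (trans_st b p) s u"

definition per_set :: "nat set \<Rightarrow> nat \<Rightarrow> nat set" where
  "per_set R p = {r + p * m | r m. r \<in> R}"

definition proper :: "nat \<Rightarrow> nat set \<Rightarrow> bool" where
  "proper p R \<longleftrightarrow> \<not> (\<exists>p' R'. 1 \<le> p' \<and> p' < p \<and> R' \<subseteq> {0..<p'} \<and>
       per_set R p = per_set R' p')"

definition nerode_equiv :: "nat \<Rightarrow> nat \<Rightarrow> nat set \<Rightarrow> nat \<Rightarrow> nat \<Rightarrow> bool" where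
  "nerode_equiv b p R s s' \<longleftrightarrow>
     (\<forall>u. set u \<subseteq> {0..<b} \<longrightarrow> (run_st b p s u \<in> R \<longleftrightarrow> run_st b p s' u \<in> R))"

end

theory Submission
  imports Defs "HOL-Number_Theory.Number_Theory"
begin

fun digs :: "nat \<Rightarrow> nat \<Rightarrow> nat \<Rightarrow> nat list" where
  "digs b 0 v = []"
| "digs b (Suc n) v = digs b n (v div b) @ [v mod b]"

lemma digs_set: "b > 0 \<Longrightarrow> set (digs b n v) \<subseteq> {0..<b}"
  by (induction n arbitrary: v) auto

lemma run_digs:
  assumes "s < p" "b > 0"
  shows "v < b ^ n \<Longrightarrow> run_st b p s (digs b n v) = (s * b ^ n + v) mod p"
proof (induction n arbitrary: v)
  case 0
  then show ?case using assms by (simp add: run_st_def)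
next
  case (Suc n)
  have "v div b < b ^ n" using Suc.prems assms
    by (simp add: div_less_iff_less_mult mult.commute)
  then have IH: "run_st b p s (digs b n (v div b)) = (s * b ^ n + v div b) mod p"
    using Suc.IH by blast
  have "run_st b p s (digs b (Suc n) v)
        = trans_st b p (run_st b p s (digs b n (v div b))) (v mod b)"
    by (simp add: run_st_def)
  also have "\<dots> = (((s * b ^ n + v div b) mod p) * b + v mod b) mod p"
    by (simp add: IH trans_st_def)
  also have "\<dots> = ((s * b ^ n + v div b) * b + v mod b) mod p"
    by (metis mod_add_left_eq mod_mult_left_eq)
  also have "(s * b ^ n + v div b) * b + v mod b = s * b ^ Suc n + v"
    by (simp add: algebra_simps)
  finally show ?case .
qed

lemma per_set_char:
  assumes "R \<subseteq> {0..<p}" "p > 0"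
  shows "per_set R p = {n. n mod p \<in> R}"
proof
  show "per_set R p \<subseteq> {n. n mod p \<in> R}"
    using assms by (auto simp: per_set_def)
  show "{n. n mod p \<in> R} \<subseteq> per_set R p"
  proof
    fix n assume "n \<in> {n. n mod p \<in> R}"
    then have "n mod p \<in> R" by simp
    moreover have "n = n mod p + p * (n div p)" by simp
    ultimately show "n \<in> per_set R p" unfolding per_set_def by blast
  qed
qed

lemma inv_mult:
  fixes P :: "nat \<Rightarrow> bool"
  assumes "\<And>y. P (y + g) = P y"
  shows "P (y + m * g) = P y"
proof (induction m)
  case (Suc m)
  have "P (y + Suc m * g) = P ((y + m * g) + g)" by (simp add: algebra_simps)
  then show ?case using assms Suc.IH by simp
qed simp

lemma core:
  assumes b: "b > 1" and Rp: "R \<subseteq> {0..<p}" and pr: "proper p R"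
    and ss: "s < s'" "s' < p"
    and n: "p \<le> b ^ n" "s * b ^ n mod p = s" "s' * b ^ n mod p = s'"
    and ne: "nerode_equiv b p R s s'"
  shows False
proof -
  have p0: "p > 0" using ss by simp
  define t where "t = s' - s"
  have t: "0 < t" "t < p" using ss unfolding t_def by auto
  define P where "P y \<longleftrightarrow> y mod p \<in> R" for y
  have A: "P (s + x) = P (s + t + x)" for x
  proof -
    have xl: "x mod p < b ^ n" using n(1) p0 by (meson less_le_trans mod_less_divisor)
    have st: "set (digs b n (x mod p)) \<subseteq> {0..<b}" using b digs_set by simp
    have r1: "run_st b p s (digs b n (x mod p)) = (s + x) mod p"
    proof -
      have "run_st b p s (digs b n (x mod p)) = (s * b ^ n + x mod p) mod p"
        using run_digs[OF _ _ xl, of s p] ss b by simp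
      also have "\<dots> = (s * b ^ n mod p + x mod p) mod p" by (simp add: mod_add_right_eq mod_add_left_eq)
      also have "\<dots> = (s + x) mod p" using n(2) by (simp add: mod_add_right_eq)
      finally show ?thesis .
    qed
    have r2: "run_st b p s' (digs b n (x mod p)) = (s' + x) mod p"
    proof -
      have "run_st b p s' (digs b n (x mod p)) = (s' * b ^ n + x mod p) mod p"
        using run_digs[OF _ _ xl, of s' p] ss b by simp
      also have "\<dots> = (s' * b ^ n mod p + x mod p) mod p" by (simp add: mod_add_right_eq mod_add_left_eq)
      also have "\<dots> = (s' + x) mod p" using n(3) by (simp add: mod_add_right_eq)
      finally show ?thesis .
    qed
    have "s + t = s'" using ss t_def by simp
    have "run_st b p s (digs b n (x mod p)) \<in> R \<longleftrightarrow> run_st b p s' (digs b n (x mod p)) \<in> R"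
      using ne st unfolding nerode_equiv_def by blast
    then show ?thesis unfolding P_def r1 r2 \<open>s + t = s'\<close> .
  qed
  have B: "P (y + t) = P y" for y
  proof -
    have "P y = P (s + (y + (p - s)))" using ss unfolding P_def by simp
    also have "\<dots> = P (s + t + (y + (p - s)))" by (rule A)
    also have "s + t + (y + (p - s)) = (y + t) + p" using ss unfolding t_def by simp
    also have "P ((y + t) + p) = P (y + t)" unfolding P_def by simp
    finally show ?thesis by simp
  qed
  define g where "g = gcd t p"
  obtain a c where ac: "t * a = p * c + g" using bezout_nat[of t p] t unfolding g_def by auto
  have Pp: "P (z + m * p) = P z" for z m unfolding P_def by simp
  have C: "P (y + g) = P y" for y
  proof -
    have "P (y + g) = P (y + g + c * p)" using Pp by simp
    also have "y + g + c * p = y + a * t" using ac by (simp add: algebra_simps)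
    also have "P (y + a * t) = P y" using inv_mult[of P t] B by blast
    finally show ?thesis .
  qed
  have g: "0 < g" "g < p"
  proof -
    have "gcd t p \<le> t" using t by (intro gcd_le1_nat) simp
    then show "g < p" unfolding g_def using t(2) by (rule le_less_trans)
    show "0 < g" using p0 unfolding g_def by simp
  qed
  define R' where "R' = {r \<in> R. r < g}"
  have "per_set R p = per_set R' g"
  proof -
    have "per_set R' g = {n. n mod g \<in> R'}"
      by (rule per_set_char) (use g in \<open>auto simp: R'_def\<close>)
    also have "\<dots> = {n. n mod g \<in> R}" using g by (auto simp: R'_def)
    also have "\<dots> = {n. n mod p \<in> R}"
    proof -
      have "P n = P (n mod g)" for n
        using inv_mult[of P g "n mod g" "n div g"] C by simp
      moreover have "n mod g mod p = n mod g" for n using g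
        by (meson mod_less mod_less_divisor order.strict_trans)
      ultimately show ?thesis unfolding P_def by auto
    qed
    also have "\<dots> = per_set R p" using per_set_char[OF Rp p0] by simp
    finally show ?thesis by simp
  qed
  moreover have "R' \<subseteq> {0..<g}" by (auto simp: R'_def)
  ultimately have "\<exists>p' R'. 1 \<le> p' \<and> p' < p \<and> R' \<subseteq> {0..<p'} \<and> per_set R p = per_set R' p'"
    using g by (intro exI[of _ g] exI[of _ R']) auto
  then show False using pr unfolding proper_def by blast
qed

theorem lemma19:
  fixes b p k d :: nat and R :: "nat set"
  assumes "b > 1" and "p \<ge> 1" and "R \<subseteq> {0..<p}" and "proper p R"
    and "k = (GREATEST k. k dvd p \<and> coprime k b)"
    and "d = p div k"
  shows "\<forall>i i'. i < k \<and> i' < k \<and> i \<noteq> i' \<longrightarrow> \<not> nerode_equiv b p R (i * d) (i' * d)"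
proof -
  have p0: "p > 0" using assms by simp
  have K: "k dvd p \<and> coprime k b"
    unfolding assms(5)
    by (rule GreatestI_nat[of _ 1 p]) (auto simp: p0 dvd_imp_le)
  have k0: "k > 0" using K p0 by (metis dvd_0_left_iff gr0I less_not_refl)
  have pkd: "p = k * d" using K assms(6) by simp
  define n where "n = totient k * p"
  have cb: "coprime b k" using K by (simp add: coprime_commute)
  have "[b ^ totient k = 1] (mod k)" by (rule euler_theorem[OF cb])
  then have bn: "[b ^ n = 1] (mod k)" unfolding n_def
    by (metis cong_pow power_mult power_one)
  have "totient k \<ge> 1" using k0 by (simp add: Suc_le_eq)
  then have "p \<le> n" unfolding n_def by simp
  also have "n < 2 ^ n" by (rule less_exp)
  also have "2 ^ n \<le> b ^ n" using assms(1) by (simp add: power_mono)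
  finally have pb: "p \<le> b ^ n" by simp
  have fix_st: "i * d * b ^ n mod p = i * d" if "i < k" for i
  proof -
    have "[i * b ^ n = i * 1] (mod k)" using bn by (rule cong_scalar_left)
    then have "i * b ^ n mod k = i" using that by (simp add: cong_def)
    then have "d * (i * b ^ n) mod (d * k) = d * i" by (metis mod_mult_mult1)
    then show ?thesis using pkd by (simp add: algebra_simps)
  qed
  have lt: "i * d < p" if "i < k" for i using that pkd k0 p0
    by (metis mult_less_cancel2 mult.commute nat_0_less_mult_iff)
  have ord: "i * d < i' * d" if "i < i'" "i' < k" for i i'
    using that pkd p0 by simp
  have sym: "nerode_equiv b p R s s' = nerode_equiv b p R s' s" for s s'
    unfolding nerode_equiv_def by blast
  show ?thesis
  proof (intro allI impI notI)
    fix i i' assume h: "i < k \<and> i' < k \<and> i \<noteq> i'" and e: "nerode_equiv b p R (i * d) (i' * d)"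
    show False
    proof (cases "i < i'")
      case True
      show False
        by (rule core[OF assms(1) assms(3) assms(4) ord[OF True] lt pb fix_st fix_st e])
           (use h in auto)
    next
      case False
      then have "i' < i" using h by simp
      show False
        by (rule core[OF assms(1) assms(3) assms(4) ord[OF \<open>i' < i\<close>] lt pb fix_st fix_st])
           (use h e sym in auto)
    qed
  qed
qed

end
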